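(* Let $q\equiv 3\pmod 4$ be a prime power. There are absolute constants $C,c>0$ such that for every $S\subset\mathbb{F}_q^2$ with $|S|\ge C q^{5/3}$, the number of rectangles with vertices in $S$ and non-zero side-lengths is at least $c\,|S|^4/q^3$.
   Context: For $u,v\in\mathbb{F}_q^2$, $u\cdot v=u_1v_1+u_2v_2$. Four points $x,z,y,t\in\mathbb{F}_q^2$ form a rectangle with vertices in the cyclic order $x,z,y,t$ if $(x-z)\cdot(y-z)=0$, $(z-y)\cdot(t-y)=0$, $(y-t)\cdot(x-t)=0$ and $(t-x)\cdot(z-x)=0$; the length of a side $uv$ is $(u-v)\cdot(u-v)$. Rectangles are counted as ordered quadruples of vertices. *)

theory Defs
  imports "HOL-Algebra.Algebra"
begin

definition pdot :: "('a, 'b) ring_scheme \<Rightarrow> 'a \<times> 'a \<Rightarrow> 'a \<times> 'a \<Rightarrow> 'a" where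
  "pdot R u v = (fst u \<otimes>\<^bsub>R\<^esub> fst v) \<oplus>\<^bsub>R\<^esub> (snd u \<otimes>\<^bsub>R\<^esub> snd v)"

definition pminus :: "('a, 'b) ring_scheme \<Rightarrow> 'a \<times> 'a \<Rightarrow> 'a \<times> 'a \<Rightarrow> 'a \<times> 'a" where
  "pminus R u v = (fst u \<ominus>\<^bsub>R\<^esub> fst v, snd u \<ominus>\<^bsub>R\<^esub> snd v)"

definition side_len :: "('a, 'b) ring_scheme \<Rightarrow> 'a \<times> 'a \<Rightarrow> 'a \<times> 'a \<Rightarrow> 'a" where
  "side_len R u v = pdot R (pminus R u v) (pminus R u v)"

text \<open>Rectangle with vertices in cyclic order x, z, y, t.\<close>
definition is_rectangle :: "('a, 'b) ring_scheme \<Rightarrow> 'a \<times> 'a \<Rightarrow> 'a \<times> 'a \<Rightarrow> 'a \<times> 'a \<Rightarrow> 'a \<times> 'a \<Rightarrow> bool" where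
  "is_rectangle R x z y t \<longleftrightarrow>
     pdot R (pminus R x z) (pminus R y z) = \<zero>\<^bsub>R\<^esub> \<and>
     pdot R (pminus R z y) (pminus R t y) = \<zero>\<^bsub>R\<^esub> \<and>
     pdot R (pminus R y t) (pminus R x t) = \<zero>\<^bsub>R\<^esub> \<and>
     pdot R (pminus R t x) (pminus R z x) = \<zero>\<^bsub>R\<^esub>"

definition rectangles_nz :: "('a, 'b) ring_scheme \<Rightarrow> ('a \<times> 'a) set \<Rightarrow> (('a \<times> 'a) \<times> ('a \<times> 'a) \<times> ('a \<times> 'a) \<times> ('a \<times> 'a)) set" where
  "rectangles_nz R S = {(x, z, y, t). x \<in> S \<and> z \<in> S \<and> y \<in> S \<and> t \<in> S \<and>
     is_rectangle R x z y t \<and>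
     side_len R x z \<noteq> \<zero>\<^bsub>R\<^esub> \<and> side_len R z y \<noteq> \<zero>\<^bsub>R\<^esub> \<and>
     side_len R y t \<noteq> \<zero>\<^bsub>R\<^esub> \<and> side_len R t x \<noteq> \<zero>\<^bsub>R\<^esub>}"

end

theory Submission
  imports Defs
begin

lemma char_not2:
  fixes R (structure)
  assumes "field R" "finite (carrier R)" "odd (card (carrier R))"
  shows "\<one> \<oplus> \<one> \<noteq> \<zero>"
proof
  assume h: "\<one> \<oplus> \<one> = \<zero>"
  interpret field R by fact
  have "add.ord \<one> dvd order (add_monoid R)"
    using add.ord_dvd_group_order one_closed assms(2) by simp
  moreover have "add.ord \<one> = 2"
  proof -
    have d: "add.ord \<one> dvd 2" using h
      by (simp add: add.pow_eq_id[symmetric] numeral_2_eq_2 add_pow_def)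
    have "add.ord \<one> \<noteq> 1" using add.ord_eq_1 by simp
    moreover have "add.ord \<one> \<noteq> 0" using d by (intro notI) simp
    moreover have "add.ord \<one> \<le> 2" using d by (rule dvd_imp_le) simp
    ultimately show ?thesis by arith
  qed
  ultimately show False using assms(3) by (simp add: order_def)
qed

lemma no_sqrt_neg1:
  fixes R (structure)
  assumes "field R" "finite (carrier R)" "card (carrier R) mod 4 = 3"
    and i: "i \<in> carrier R" "i \<otimes> i = \<ominus> \<one>"
  shows False
proof -
  interpret field R by fact
  have odd: "odd (card (carrier R))" using assms(3) by presburger
  have c2: "\<one> \<oplus> \<one> \<noteq> \<zero>" using char_not2[OF assms(1,2) odd] .
  interpret M: group "Multiplicative_Group.mult_of R" by (rule field_mult_group)
  have i0: "i \<noteq> \<zero>"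
  proof
    assume "i = \<zero>"
    then have "\<ominus> \<one> = \<zero>" using i by simp
    then show False by (metis minus_minus minus_zero one_closed one_not_zero)
  qed
  then have iM: "i \<in> carrier (Multiplicative_Group.mult_of R)" using i by simp
  have "M.ord i dvd order (Multiplicative_Group.mult_of R)"
    using M.ord_dvd_group_order iM assms(2) by (simp add: finite_mult_of)
  then have dq: "M.ord i dvd card (carrier R) - 1"
    using order_mult_of[OF assms(2)] by (simp add: order_def)
  have p2: "i [^]\<^bsub>Multiplicative_Group.mult_of R\<^esub> (2::nat) = \<ominus> \<one>"
    using i by (simp add: Multiplicative_Group.nat_pow_mult_of numeral_2_eq_2)
  have p4: "i [^]\<^bsub>Multiplicative_Group.mult_of R\<^esub> (4::nat) = \<one>"
  proof -
    have "i [^]\<^bsub>Multiplicative_Group.mult_of R\<^esub> (4::nat) = i [^]\<^bsub>Multiplicative_Group.mult_of R\<^esub> (2::nat) \<otimes>\<^bsub>Multiplicative_Group.mult_of R\<^esub> i [^]\<^bsub>Multiplicative_Group.mult_of R\<^esub> (2::nat)"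
      using M.nat_pow_mult[OF iM, of 2 2] by simp
    also have "\<dots> = \<ominus> \<one> \<otimes> \<ominus> \<one>" using p2 by simp
    also have "\<dots> = \<one>" by (simp add: l_minus r_minus)
    finally show ?thesis .
  qed
  have n1: "\<ominus> \<one> \<noteq> \<one>"
  proof
    assume "\<ominus> \<one> = \<one>"
    then have "\<one> \<oplus> \<one> = \<one> \<oplus> \<ominus> \<one>" by simp
    then show False using c2 by (simp add: r_neg)
  qed
  have d4: "M.ord i dvd 4" using p4 M.pow_eq_id[OF iM] by simp
  have nd2: "\<not> M.ord i dvd 2" using p2 n1 M.pow_eq_id[OF iM, of 2] by simp
  have "M.ord i = 4"
  proof -
    have "M.ord i \<le> 4" using d4 by (rule dvd_imp_le) simp
    moreover have "M.ord i \<noteq> 0" "M.ord i \<noteq> 3" using d4 by (intro notI, simp)+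
    moreover have "M.ord i \<noteq> 1" "M.ord i \<noteq> 2" using nd2 by auto
    ultimately show ?thesis by arith
  qed
  with dq have "4 dvd card (carrier R) - 1" by simp
  then show False using assms(3) by presburger
qed

lemma aniso:
  fixes R (structure)
  assumes "field R" "finite (carrier R)" "card (carrier R) mod 4 = 3"
    and ab: "a \<in> carrier R" "b \<in> carrier R" "a \<otimes> a \<oplus> b \<otimes> b = \<zero>"
  shows "a = \<zero> \<and> b = \<zero>"
proof -
  interpret field R by fact
  have b0: "b = \<zero>"
  proof (rule ccontr)
    assume "b \<noteq> \<zero>"
    then have bU: "b \<in> Units R" using ab field_Units by simp
    define c where "c = inv b"
    have c: "c \<in> carrier R" "b \<otimes> c = \<one>" using bU unfolding c_def by simp_all
    have "(a \<otimes> c) \<otimes> (a \<otimes> c) = (a \<otimes> a \<oplus> b \<otimes> b) \<otimes> (c \<otimes> c) \<ominus> (b \<otimes> c) \<otimes> (b \<otimes> c)"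
      using ab(1,2) c(1) by algebra
    also have "\<dots> = \<ominus> \<one>" using ab c by (simp add: minus_eq)
    finally show False using no_sqrt_neg1[OF assms(1-3), of "a \<otimes> c"] ab c by simp
  qed
  then have "a \<otimes> a = \<zero>" using ab by simp
  then have "a = \<zero>" using ab integral by blast
  with b0 show ?thesis by simp
qed


lemma (in cring) id_uv:
  assumes "u \<in> carrier R" "v \<in> carrier R"
  shows "((\<one> \<oplus> \<one>) \<otimes> (\<one> \<oplus> \<one>)) \<otimes> (u \<otimes> v) = (u \<oplus> v) \<otimes> (u \<oplus> v) \<ominus> (u \<ominus> v) \<otimes> (u \<ominus> v)"
  using assms by algebra

lemma (in cring) id_a:
  assumes "x \<in> carrier R" "y \<in> carrier R" "z \<in> carrier R"
  shows "z \<ominus> (x \<oplus> y \<ominus> z) = \<ominus> ((x \<ominus> z) \<oplus> (y \<ominus> z))"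
  using assms by algebra

lemma (in cring) id_b:
  assumes "x \<in> carrier R" "y \<in> carrier R" "z \<in> carrier R"
  shows "x \<ominus> y = (x \<ominus> z) \<ominus> (y \<ominus> z)"
  using assms by algebra

lemma (in cring) id1:
  assumes xyz: "x \<in> carrier R" "y \<in> carrier R" "z \<in> carrier R"
  shows "((\<one> \<oplus> \<one>) \<otimes> (\<one> \<oplus> \<one>)) \<otimes> ((x \<ominus> z) \<otimes> (y \<ominus> z)) =
     (z \<ominus> (x \<oplus> y \<ominus> z)) \<otimes> (z \<ominus> (x \<oplus> y \<ominus> z)) \<ominus> (x \<ominus> y) \<otimes> (x \<ominus> y)"
proof -
  have u: "x \<ominus> z \<in> carrier R" "y \<ominus> z \<in> carrier R" using xyz by simp_all
  have eqA: "(z \<ominus> (x \<oplus> y \<ominus> z)) \<otimes> (z \<ominus> (x \<oplus> y \<ominus> z)) = ((x \<ominus> z) \<oplus> (y \<ominus> z)) \<otimes> ((x \<ominus> z) \<oplus> (y \<ominus> z))"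
    unfolding id_a[OF xyz] using u by (simp add: l_minus r_minus)
  have "((\<one> \<oplus> \<one>) \<otimes> (\<one> \<oplus> \<one>)) \<otimes> ((x \<ominus> z) \<otimes> (y \<ominus> z)) =
     ((x \<ominus> z) \<oplus> (y \<ominus> z)) \<otimes> ((x \<ominus> z) \<oplus> (y \<ominus> z)) \<ominus> ((x \<ominus> z) \<ominus> (y \<ominus> z)) \<otimes> ((x \<ominus> z) \<ominus> (y \<ominus> z))"
    by (rule id_uv[OF u])
  also have "\<dots> = (z \<ominus> (x \<oplus> y \<ominus> z)) \<otimes> (z \<ominus> (x \<oplus> y \<ominus> z)) \<ominus> (x \<ominus> y) \<otimes> (x \<ominus> y)"
    by (simp only: eqA id_b[OF xyz, symmetric])
  finally show ?thesis .
qed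

lemma (in cring) id2:
  assumes "k \<in> carrier R" "p1 \<in> carrier R" "p2 \<in> carrier R" "a1 \<in> carrier R" "a2 \<in> carrier R" "b1 \<in> carrier R" "b2 \<in> carrier R"
    and "k \<otimes> p1 = a1 \<ominus> b1" "k \<otimes> p2 = a2 \<ominus> b2"
  shows "k \<otimes> (p1 \<oplus> p2) = (a1 \<oplus> a2) \<ominus> (b1 \<oplus> b2)"
proof -
  have "k \<otimes> (p1 \<oplus> p2) = k \<otimes> p1 \<oplus> k \<otimes> p2" using assms(1-3) by (simp add: r_distr)
  also have "\<dots> = (a1 \<ominus> b1) \<oplus> (a2 \<ominus> b2)" using assms(8,9) by simp
  also have "\<dots> = (a1 \<oplus> a2) \<ominus> (b1 \<oplus> b2)" using assms(4-7) by algebra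
  finally show ?thesis .
qed

lemma rect_cond:
  fixes R (structure)
  assumes "field R" and c2: "\<one> \<oplus> \<one> \<noteq> \<zero>"
    and x: "fst x \<in> carrier R" "snd x \<in> carrier R"
    and y: "fst y \<in> carrier R" "snd y \<in> carrier R"
    and z: "fst z \<in> carrier R" "snd z \<in> carrier R"
    and t: "fst t \<in> carrier R" "snd t \<in> carrier R"
    and h1: "fst x \<oplus> fst y = fst z \<oplus> fst t"
    and h2: "snd x \<oplus> snd y = snd z \<oplus> snd t"
    and h3: "side_len R x y = side_len R z t"
  shows "pdot R (pminus R x z) (pminus R y z) = \<zero>"
proof -
  interpret field R by fact
  obtain x1 x2 where xx: "x = (x1, x2)" by (cases x)
  obtain y1 y2 where yy: "y = (y1, y2)" by (cases y)
  obtain z1 z2 where zz: "z = (z1, z2)" by (cases z)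
  obtain t1 t2 where tt: "t = (t1, t2)" by (cases t)
  note C = x y z t
  note C = C[unfolded xx yy zz tt fst_conv snd_conv]
  have e1: "t1 = x1 \<oplus> y1 \<ominus> z1"
  proof -
    have "z1 \<oplus> t1 \<ominus> z1 \<ominus> t1 = \<zero>" using C by algebra
    then have "z1 \<oplus> t1 \<ominus> z1 = t1" using C by (subst (asm) r_right_minus_eq) simp_all
    then show ?thesis using h1 unfolding xx yy zz tt fst_conv by simp
  qed
  have e2: "t2 = x2 \<oplus> y2 \<ominus> z2"
  proof -
    have "z2 \<oplus> t2 \<ominus> z2 \<ominus> t2 = \<zero>" using C by algebra
    then have "z2 \<oplus> t2 \<ominus> z2 = t2" using C by (subst (asm) r_right_minus_eq) simp_all
    then show ?thesis using h2 unfolding xx yy zz tt snd_conv by simp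
  qed
  define P where "P = pdot R (pminus R x z) (pminus R y z)"
  have P: "P = (x1 \<ominus> z1) \<otimes> (y1 \<ominus> z1) \<oplus> (x2 \<ominus> z2) \<otimes> (y2 \<ominus> z2)"
    unfolding P_def pdot_def pminus_def xx yy zz by simp
  have h3': "(x1 \<ominus> y1) \<otimes> (x1 \<ominus> y1) \<oplus> (x2 \<ominus> y2) \<otimes> (x2 \<ominus> y2)
     = (z1 \<ominus> t1) \<otimes> (z1 \<ominus> t1) \<oplus> (z2 \<ominus> t2) \<otimes> (z2 \<ominus> t2)"
    using h3 unfolding side_len_def pdot_def pminus_def xx yy zz tt by simp
  have "((\<one> \<oplus> \<one>) \<otimes> (\<one> \<oplus> \<one>)) \<otimes> P =
     ((z1 \<ominus> (x1 \<oplus> y1 \<ominus> z1)) \<otimes> (z1 \<ominus> (x1 \<oplus> y1 \<ominus> z1)) \<oplus> (z2 \<ominus> (x2 \<oplus> y2 \<ominus> z2)) \<otimes> (z2 \<ominus> (x2 \<oplus> y2 \<ominus> z2)))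
     \<ominus> ((x1 \<ominus> y1) \<otimes> (x1 \<ominus> y1) \<oplus> (x2 \<ominus> y2) \<otimes> (x2 \<ominus> y2))"
    unfolding P by (rule id2[OF _ _ _ _ _ _ _ id1 id1]) (use C in simp_all)
  also have "\<dots> = \<zero>"
  proof -
    note h3'' = h3'[unfolded e1 e2]
    show ?thesis by (subst r_right_minus_eq) (use C h3'' in simp_all)
  qed
  finally have "((\<one> \<oplus> \<one>) \<otimes> (\<one> \<oplus> \<one>)) \<otimes> P = \<zero>" .
  moreover have "P \<in> carrier R" unfolding P using C by simp
  ultimately show ?thesis unfolding P_def using c2 integral by blast
qed

lemma side_len_sym:
  fixes R (structure)
  assumes "field R" "fst u \<in> carrier R" "snd u \<in> carrier R" "fst v \<in> carrier R" "snd v \<in> carrier R"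
  shows "side_len R u v = side_len R v u"
proof -
  interpret field R by fact
  obtain u1 u2 where uu: "u = (u1, u2)" by (cases u)
  obtain v1 v2 where vv: "v = (v1, v2)" by (cases v)
  have C: "u1 \<in> carrier R" "u2 \<in> carrier R" "v1 \<in> carrier R" "v2 \<in> carrier R"
    using assms(2-) uu vv by auto
  have "((u1 \<ominus> v1) \<otimes> (u1 \<ominus> v1) \<oplus> (u2 \<ominus> v2) \<otimes> (u2 \<ominus> v2)) \<ominus>
        ((v1 \<ominus> u1) \<otimes> (v1 \<ominus> u1) \<oplus> (v2 \<ominus> u2) \<otimes> (v2 \<ominus> u2)) = \<zero>"
    using C by algebra
  then have "(u1 \<ominus> v1) \<otimes> (u1 \<ominus> v1) \<oplus> (u2 \<ominus> v2) \<otimes> (u2 \<ominus> v2) =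
        (v1 \<ominus> u1) \<otimes> (v1 \<ominus> u1) \<oplus> (v2 \<ominus> u2) \<otimes> (v2 \<ominus> u2)"
    using C by (subst (asm) r_right_minus_eq) simp_all
  then show ?thesis unfolding side_len_def pdot_def pminus_def uu vv fst_conv snd_conv .
qed

lemma side_len_nz:
  fixes R (structure)
  assumes "field R" "finite (carrier R)" "card (carrier R) mod 4 = 3"
    and "fst u \<in> carrier R" "snd u \<in> carrier R" "fst v \<in> carrier R" "snd v \<in> carrier R"
    and "u \<noteq> v"
  shows "side_len R u v \<noteq> \<zero>"
proof
  interpret field R by fact
  assume "side_len R u v = \<zero>"
  then have "(fst u \<ominus> fst v) \<otimes> (fst u \<ominus> fst v) \<oplus> (snd u \<ominus> snd v) \<otimes> (snd u \<ominus> snd v) = \<zero>"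
    unfolding side_len_def pdot_def pminus_def by simp
  then have "fst u \<ominus> fst v = \<zero> \<and> snd u \<ominus> snd v = \<zero>"
    by (intro aniso[OF assms(1-3)]) (use assms(4-7) in simp_all)
  then have "fst u = fst v \<and> snd u = snd v"
    using r_right_minus_eq[OF assms(4,6)] r_right_minus_eq[OF assms(5,7)] by blast
  then show False using assms(8) by (simp add: prod_eq_iff)
qed

lemma cauchy_schwarz_sum:
  fixes a :: "'k \<Rightarrow> real"
  assumes "finite K"
  shows "(\<Sum>k\<in>K. a k)^2 \<le> real (card K) * (\<Sum>k\<in>K. (a k)^2)"
proof -
  have "0 \<le> (\<Sum>k\<in>K. \<Sum>l\<in>K. (a k - a l)^2)" by (intro sum_nonneg) auto
  also have "\<dots> = (\<Sum>k\<in>K. \<Sum>l\<in>K. (a k)^2 + (a l)^2 - 2 * a k * a l)"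
    by (simp add: power2_diff)
  also have "\<dots> = 2 * (real (card K) * (\<Sum>k\<in>K. (a k)^2)) - 2 * (\<Sum>k\<in>K. a k)^2"
    by (simp add: sum_subtractf sum.distrib sum_distrib_left sum_distrib_right power2_eq_square
        mult.assoc mult.left_commute) (rule sum.swap)
  finally show ?thesis by linarith
qed

lemma rect_member:
  fixes R (structure)
  assumes fR: "field R" and fin: "finite (carrier R)" and q4: "card (carrier R) mod 4 = 3"
    and SR: "S \<subseteq> carrier R \<times> carrier R"
    and xyzt: "x \<in> S" "y \<in> S" "z \<in> S" "t \<in> S"
    and h1: "fst x \<oplus> fst y = fst z \<oplus> fst t"
    and h2: "snd x \<oplus> snd y = snd z \<oplus> snd t"
    and h3: "side_len R x y = side_len R z t"
    and n1: "(z, t) \<noteq> (x, y)" and n2: "(z, t) \<noteq> (y, x)"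
  shows "(x, z, y, t) \<in> rectangles_nz R S"
proof -
  interpret field R by fact
  have odd: "odd (card (carrier R))" using q4 by presburger
  have c2: "\<one> \<oplus> \<one> \<noteq> \<zero>" using char_not2[OF fR fin odd] .
  have C: "fst x \<in> carrier R" "snd x \<in> carrier R" "fst y \<in> carrier R" "snd y \<in> carrier R"
     "fst z \<in> carrier R" "snd z \<in> carrier R" "fst t \<in> carrier R" "snd t \<in> carrier R"
    using SR xyzt by auto
  have r1: "pdot R (pminus R x z) (pminus R y z) = \<zero>"
    by (rule rect_cond[OF fR c2 C h1 h2 h3])
  have r2: "pdot R (pminus R z y) (pminus R t y) = \<zero>"
  proof (rule rect_cond[OF fR c2 C(5-8) C(3-4) C(1-2)])
    show "fst z \<oplus> fst t = fst y \<oplus> fst x" using h1 C by (metis a_comm)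
    show "snd z \<oplus> snd t = snd y \<oplus> snd x" using h2 C by (metis a_comm)
    show "side_len R z t = side_len R y x" using h3 side_len_sym[OF fR C(1-4)] by simp
  qed
  have r3: "pdot R (pminus R y t) (pminus R x t) = \<zero>"
  proof (rule rect_cond[OF fR c2 C(3-4) C(1-2) C(7-8) C(5-6)])
    show "fst y \<oplus> fst x = fst t \<oplus> fst z" using h1 C by (metis a_comm)
    show "snd y \<oplus> snd x = snd t \<oplus> snd z" using h2 C by (metis a_comm)
    show "side_len R y x = side_len R t z" using h3 side_len_sym[OF fR C(1-4)] side_len_sym[OF fR C(5-8)] by simp
  qed
  have r4: "pdot R (pminus R t x) (pminus R z x) = \<zero>"
  proof (rule rect_cond[OF fR c2 C(7-8) C(5-6) C(1-2) C(3-4)])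
    show "fst t \<oplus> fst z = fst x \<oplus> fst y" using h1 C by (metis a_comm)
    show "snd t \<oplus> snd z = snd x \<oplus> snd y" using h2 C by (metis a_comm)
    show "side_len R t z = side_len R x y" using h3 side_len_sym[OF fR C(5-8)] by simp
  qed
  have d1: "x \<noteq> z"
  proof
    assume "x = z"
    then have "fst y = fst t" "snd y = snd t" using h1 h2 C by simp_all
    then show False using n1 \<open>x = z\<close> by (simp add: prod_eq_iff)
  qed
  have d2: "z \<noteq> y"
  proof
    assume e: "z = y"
    have "fst x \<oplus> fst y = fst t \<oplus> fst y" using h1 C e by (metis a_comm)
    moreover have "snd x \<oplus> snd y = snd t \<oplus> snd y" using h2 C e by (metis a_comm)
    ultimately have "fst x = fst t" "snd x = snd t" using C by simp_all
    then show False using n2 e by (simp add: prod_eq_iff)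
  qed
  have d3: "y \<noteq> t"
  proof
    assume e: "y = t"
    then have "fst x = fst z" "snd x = snd z" using h1 h2 C by simp_all
    then show False using n1 e by (simp add: prod_eq_iff)
  qed
  have d4: "t \<noteq> x"
  proof
    assume e: "t = x"
    have "fst x \<oplus> fst y = fst x \<oplus> fst z" using h1 C e by (metis a_comm)
    moreover have "snd x \<oplus> snd y = snd x \<oplus> snd z" using h2 C e by (metis a_comm)
    ultimately have "fst y = fst z" "snd y = snd z" using C by simp_all
    then show False using n2 e by (simp add: prod_eq_iff)
  qed
  have s1: "side_len R x z \<noteq> \<zero>" using side_len_nz[OF fR fin q4 C(1-2) C(5-6) d1] .
  have s2: "side_len R z y \<noteq> \<zero>" using side_len_nz[OF fR fin q4 C(5-6) C(3-4) d2] .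
  have s3: "side_len R y t \<noteq> \<zero>" using side_len_nz[OF fR fin q4 C(3-4) C(7-8) d3] .
  have s4: "side_len R t x \<noteq> \<zero>" using side_len_nz[OF fR fin q4 C(7-8) C(1-2) d4] .
  show ?thesis unfolding rectangles_nz_def is_rectangle_def
    using xyzt r1 r2 r3 r4 s1 s2 s3 s4 by simp
qed

lemma count_bound:
  fixes R (structure) and S :: "('a \<times> 'a) set"
  assumes fR: "field R" and fin: "finite (carrier R)" and q4: "card (carrier R) mod 4 = 3"
    and SR: "S \<subseteq> carrier R \<times> carrier R"
  shows "real (card S) ^ 4 \<le> real (card (carrier R)) ^ 3 * (real (card (rectangles_nz R S)) + 2 * real (card S) ^ 2)"
proof -
  interpret field R by fact
  define F where "F = carrier R"
  define SS where "SS = S \<times> S"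
  define key where "key = (\<lambda>p::('a \<times> 'a) \<times> ('a \<times> 'a). (fst (fst p) \<oplus> fst (snd p), snd (fst p) \<oplus> snd (snd p), side_len R (fst p) (snd p)))"
  define K where "K = F \<times> F \<times> F"
  define P where "P = (\<lambda>k. {p \<in> SS. key p = k})"
  define E where "E = {(p, p'). p \<in> SS \<and> p' \<in> SS \<and> key p = key p'}"
  have finS: "finite S" using SR fin by (meson finite_SigmaI finite_subset)
  have finSS: "finite SS" unfolding SS_def using finS by simp
  have finK: "finite K" unfolding K_def F_def using fin by simp
  have cardK: "card K = card F ^ 3" unfolding K_def by (simp add: card_cartesian_product power3_eq_cube)
  have keyK: "key ` SS \<subseteq> K"
  proof
    fix k assume "k \<in> key ` SS"
    then obtain p where p: "p \<in> SS" "k = key p" by blast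
    then have "fst (fst p) \<in> carrier R" "snd (fst p) \<in> carrier R" "fst (snd p) \<in> carrier R" "snd (snd p) \<in> carrier R"
      using SR unfolding SS_def by auto
    then show "k \<in> K" unfolding p(2) key_def K_def F_def side_len_def pdot_def pminus_def by simp
  qed
  have finP: "finite (P k)" for k unfolding P_def using finSS by simp
  have E_eq: "E = Sigma SS (\<lambda>p. P (key p))" by (auto simp: E_def P_def)
  have "card E = (\<Sum>p\<in>SS. card (P (key p)))" by (simp add: E_eq finP finSS)
  also have "\<dots> = (\<Sum>k\<in>K. \<Sum>p\<in>{p\<in>SS. key p = k}. card (P (key p)))"
    by (rule sum.group[symmetric, OF finSS finK keyK])
  also have "\<dots> = (\<Sum>k\<in>K. card (P k) ^ 2)"
  proof (rule sum.cong[OF refl])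
    fix k
    have "(\<Sum>p\<in>{p\<in>SS. key p = k}. card (P (key p))) = (\<Sum>p\<in>P k. card (P k))"
      unfolding P_def by (rule sum.cong) auto
    also have "\<dots> = card (P k) * card (P k)" by simp
    also have "\<dots> = card (P k) ^ 2" by (simp add: Power.power2_eq_square)
    finally show "(\<Sum>p\<in>{p\<in>SS. key p = k}. card (P (key p))) = card (P k) ^ 2" .
  qed
  finally have cardE: "card E = (\<Sum>k\<in>K. card (P k) ^ 2)" .
  have "card SS = (\<Sum>p\<in>SS. (1::nat))" by simp
  also have "\<dots> = (\<Sum>k\<in>K. \<Sum>p\<in>{p\<in>SS. key p = k}. (1::nat))"
    by (rule sum.group[symmetric, OF finSS finK keyK])
  also have "\<dots> = (\<Sum>k\<in>K. card (P k))" unfolding P_def by simp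
  finally have cardSS: "card SS = (\<Sum>k\<in>K. card (P k))" .
  have CS: "real (card SS) ^ 2 \<le> real (card K) * real (card E)"
  proof -
    have "real (card SS) ^ 2 = (\<Sum>k\<in>K. real (card (P k))) ^ 2" unfolding cardSS by simp
    also have "\<dots> \<le> real (card K) * (\<Sum>k\<in>K. real (card (P k)) ^ 2)"
      by (rule cauchy_schwarz_sum[OF finK])
    also have "\<dots> = real (card K) * real (card E)" unfolding cardE by simp
    finally show ?thesis .
  qed
  define D where "D = (\<lambda>p. (p, p)) ` SS \<union> (\<lambda>p. (p, prod.swap p)) ` SS"
  have cardD: "card D \<le> 2 * card SS"
  proof -
    have "card D \<le> card ((\<lambda>p. (p, p)) ` SS) + card ((\<lambda>p. (p, prod.swap p)) ` SS)"
      unfolding D_def by (rule card_Un_le)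
    also have "\<dots> \<le> card SS + card SS" by (intro add_mono card_image_le finSS)
    finally show ?thesis by simp
  qed
  define f where "f = (\<lambda>((x::'a\<times>'a, y::'a\<times>'a), (z::'a\<times>'a, t::'a\<times>'a)). (x, z, y, t))"
  have inj: "inj_on f (E - D)" unfolding f_def by (auto simp: inj_on_def)
  have sub: "f ` (E - D) \<subseteq> rectangles_nz R S"
  proof
    fix r assume "r \<in> f ` (E - D)"
    then obtain x y z t where m: "((x, y), (z, t)) \<in> E" "((x, y), (z, t)) \<notin> D" and r: "r = (x, z, y, t)"
      unfolding f_def by auto
    from m(1) have S4: "x \<in> S" "y \<in> S" "z \<in> S" "t \<in> S" and kk: "key (x, y) = key (z, t)"
      unfolding E_def SS_def by auto
    from kk have h1: "fst x \<oplus> fst y = fst z \<oplus> fst t" and h2: "snd x \<oplus> snd y = snd z \<oplus> snd t"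
      and h3: "side_len R x y = side_len R z t" unfolding key_def by simp_all
    from m(2) S4 have n1: "(z, t) \<noteq> (x, y)" and n2: "(z, t) \<noteq> (y, x)"
      unfolding D_def SS_def by auto
    show "r \<in> rectangles_nz R S" unfolding r
      by (rule rect_member[OF fR fin q4 SR S4 h1 h2 h3 n1 n2])
  qed
  have finRect: "finite (rectangles_nz R S)"
  proof (rule finite_subset)
    show "rectangles_nz R S \<subseteq> S \<times> S \<times> S \<times> S" unfolding rectangles_nz_def by auto
    show "finite (S \<times> S \<times> S \<times> S)" using finS by simp
  qed
  have "card (E - D) = card (f ` (E - D))" by (rule card_image[OF inj, symmetric])
  also have "\<dots> \<le> card (rectangles_nz R S)" by (rule card_mono[OF finRect sub])
  finally have c1: "card (E - D) \<le> card (rectangles_nz R S)" .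
  have finE: "finite E" unfolding E_eq using finSS finP by simp
  have "card E \<le> card (D \<union> (E - D))" by (rule card_mono) (use finE finSS in \<open>auto simp: D_def\<close>)
  also have "\<dots> \<le> card D + card (E - D)" by (rule card_Un_le)
  finally have c2: "card E \<le> card (rectangles_nz R S) + 2 * card SS" using c1 cardD by linarith
  have cSS: "card SS = card S ^ 2" unfolding SS_def by (simp add: card_cartesian_product Power.power2_eq_square)
  have c3: "real (card E) \<le> real (card (rectangles_nz R S)) + 2 * real (card S) ^ 2"
  proof -
    have "real (card E) \<le> real (card (rectangles_nz R S) + 2 * card SS)" using c2 by (simp only: of_nat_le_iff)
    also have "\<dots> = real (card (rectangles_nz R S)) + 2 * real (card S) ^ 2" unfolding cSS by simp
    finally show ?thesis .
  qed
  have "real (card S) ^ 4 = real (card SS) ^ 2" unfolding cSS by simp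
  also have "\<dots> \<le> real (card K) * real (card E)" by (rule CS)
  also have "\<dots> \<le> real (card K) * (real (card (rectangles_nz R S)) + 2 * real (card S) ^ 2)"
    by (rule mult_left_mono[OF c3]) simp
  finally show ?thesis unfolding cardK F_def by simp
qed

lemma final_arith:
  fixes q s N :: real
  assumes q1: "1 \<le> q" and sC: "s \<ge> 2 * q powr (5/3)"
    and cb: "s ^ 4 \<le> q ^ 3 * (N + 2 * s ^ 2)"
  shows "N \<ge> 1/2 * s ^ 4 / q ^ 3"
proof -
  have qpos: "0 < q" using q1 by simp
  have p0: "0 \<le> q powr (5/3)" by simp
  have "(q powr (5/3))^2 = q powr (5/3) * q powr (5/3)" by (simp add: Power.power2_eq_square)
  also have "\<dots> = q powr (10/3)" by (simp add: powr_add[symmetric])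
  finally have e: "(q powr (5/3))^2 = q powr (10/3)" .
  have "q ^ 3 = q powr (real 3)" using powr_realpow[OF qpos, of 3] by simp
  also have "\<dots> \<le> q powr (10/3)" by (rule powr_mono) (use q1 in simp_all)
  finally have q3: "q ^ 3 \<le> (q powr (5/3))^2" using e by simp
  have "(2 * q powr (5/3))^2 \<le> s^2" by (rule power_mono[OF sC]) (use p0 in simp)
  then have s2: "4 * q ^ 3 \<le> s ^ 2" using q3 by (simp add: power_mult_distrib)
  have q3pos: "0 < q ^ 3" using qpos by simp
  have A1: "s ^ 4 / q ^ 3 \<le> N + 2 * s ^ 2" using cb q3pos by (simp add: pos_divide_le_eq mult.commute)
  have "4 * s ^ 2 * q ^ 3 \<le> s ^ 4"
  proof -
    have "s ^ 2 * (4 * q ^ 3) \<le> s ^ 2 * s ^ 2" by (rule mult_left_mono[OF s2]) simp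
    then show ?thesis by (simp add: algebra_simps flip: power_add)
  qed
  then have A2: "4 * s ^ 2 \<le> s ^ 4 / q ^ 3" using q3pos by (simp add: pos_le_divide_eq)
  show ?thesis using A1 A2 by simp
qed

theorem lemma2p3:
  "\<exists>C>0. \<exists>c>0. \<forall>(R :: nat ring) (S :: (nat \<times> nat) set).
     field R \<longrightarrow> finite (carrier R) \<longrightarrow> card (carrier R) mod 4 = 3 \<longrightarrow>
     S \<subseteq> carrier R \<times> carrier R \<longrightarrow>
     real (card S) \<ge> C * real (card (carrier R)) powr (5/3) \<longrightarrow>
     real (card (rectangles_nz R S)) \<ge> c * real (card S) ^ 4 / real (card (carrier R)) ^ 3"
proof -
  have main: "\<forall>(R :: nat ring) (S :: (nat \<times> nat) set).
     field R \<longrightarrow> finite (carrier R) \<longrightarrow> card (carrier R) mod 4 = 3 \<longrightarrow>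
     S \<subseteq> carrier R \<times> carrier R \<longrightarrow>
     real (card S) \<ge> 2 * real (card (carrier R)) powr (5/3) \<longrightarrow>
     real (card (rectangles_nz R S)) \<ge> 1/2 * real (card S) ^ 4 / real (card (carrier R)) ^ 3"
  proof (intro allI impI)
    fix R :: "nat ring" and S :: "(nat \<times> nat) set"
    assume fR: "field R" and fin: "finite (carrier R)" and q4: "card (carrier R) mod 4 = 3"
      and SR: "S \<subseteq> carrier R \<times> carrier R"
      and sC: "real (card S) \<ge> 2 * real (card (carrier R)) powr (5/3)"
    have q1: "1 \<le> real (card (carrier R))" using q4 by simp
    show "real (card (rectangles_nz R S)) \<ge> 1/2 * real (card S) ^ 4 / real (card (carrier R)) ^ 3"
      by (rule final_arith[OF q1 sC count_bound[OF fR fin q4 SR]])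
  qed
  have "(2::real) > 0" "(1/2::real) > 0" by simp_all
  with main show ?thesis by blast
qed

end
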